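(* Let $M$ be a timelike surface in $\mathbb{R}^{n,1}$ with a canonical null direction with respect to a constant unit spacelike vector $Z$, let $W$ be the lightlike tangent vector field on $M$ with $\langle Z^\top,W\rangle=-1$, and let $a:=\langle II(W,W),Z^\perp\rangle$. Then $$\nabla_{Z^{\top}}Z^{\top}=0,\quad \nabla_{Z^{\top}}W=0,\quad \nabla_WZ^{\top}=-aZ^{\top},\quad \nabla_WW=aW,$$ and consequently $[Z^{\top},W]=aZ^{\top}$.
   Context: $\mathbb{R}^{n,1}$ is $\mathbb{R}^{n+1}$ with the metric $-dx_1^2+dx_2^2+\dots+dx_{n+1}^2$. A surface is timelike if the induced metric has signature $(1,1)$; a vector $v$ is lightlike if $v\ne0$ and $\langle v,v\rangle=0$. For a constant vector $Z$, $Z=Z^\top+Z^\perp$ along $M$ (tangent and normal parts); $M$ has a canonical null direction with respect to $Z$ if $Z^\top$ is lightlike everywhere on $M$. Since the tangent planes are Lorentzian, there is a unique lightlike tangent field $W$ with $\langle Z^\top,W\rangle=-1$. $\nabla$ is the Levi-Civita connection of $M$ and $II$ its second fundamental form. *)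

theory Defs
  imports "HOL-Analysis.Analysis"
begin

text \<open>Minkowski space R^{n,1} modelled as real \<times> real^'n: first component is the
  time coordinate x_1, the second the spatial coordinates x_2..x_{n+1}.\<close>

type_synonym 'n mink_vec = "real \<times> (real ^ 'n)"

definition mink :: "'n::finite mink_vec \<Rightarrow> 'n mink_vec \<Rightarrow> real" where
  "mink v w = - fst v * fst w + snd v \<bullet> snd w"

definition lightlike :: "'n::finite mink_vec \<Rightarrow> bool" where
  "lightlike v \<longleftrightarrow> v \<noteq> 0 \<and> mink v v = 0"

fun Ck_on :: "nat \<Rightarrow> (real \<times> real) set \<Rightarrow> (real \<times> real \<Rightarrow> 'a::real_normed_vector) \<Rightarrow> bool" where
  "Ck_on 0 U f = continuous_on U f"
| "Ck_on (Suc k) U f = (\<exists>f1 f2. (\<forall>p\<in>U. (f has_derivative (\<lambda>h. fst h *\<^sub>R f1 p + snd h *\<^sub>R f2 p)) (at p))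
                          \<and> Ck_on k U f1 \<and> Ck_on k U f2)"

definition smooth_on :: "(real \<times> real) set \<Rightarrow> (real \<times> real \<Rightarrow> 'a::real_normed_vector) \<Rightarrow> bool" where
  "smooth_on U f \<longleftrightarrow> (\<forall>k. Ck_on k U f)"

definition dX :: "(real \<times> real \<Rightarrow> 'n::finite mink_vec) \<Rightarrow> real \<times> real \<Rightarrow> real \<times> real \<Rightarrow> 'n mink_vec" where
  "dX X p = frechet_derivative X (at p)"

definition tangent_space :: "(real \<times> real \<Rightarrow> 'n::finite mink_vec) \<Rightarrow> real \<times> real \<Rightarrow> 'n mink_vec set" where
  "tangent_space X p = range (dX X p)"

definition timelike_surface :: "(real \<times> real) set \<Rightarrow> (real \<times> real \<Rightarrow> 'n::finite mink_vec) \<Rightarrow> bool" where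
  "timelike_surface U X \<longleftrightarrow> open U \<and> smooth_on U X \<and>
     (\<forall>p\<in>U. inj (dX X p) \<and>
        (\<exists>e1 e2. e1 \<in> tangent_space X p \<and> e2 \<in> tangent_space X p \<and>
           mink e1 e1 = -1 \<and> mink e2 e2 = 1 \<and> mink e1 e2 = 0))"

definition tan_part :: "(real \<times> real \<Rightarrow> 'n::finite mink_vec) \<Rightarrow> real \<times> real \<Rightarrow> 'n mink_vec \<Rightarrow> 'n mink_vec" where
  "tan_part X p v = (THE u. u \<in> tangent_space X p \<and> (\<forall>w\<in>tangent_space X p. mink (v - u) w = 0))"

definition nor_part :: "(real \<times> real \<Rightarrow> 'n::finite mink_vec) \<Rightarrow> real \<times> real \<Rightarrow> 'n mink_vec \<Rightarrow> 'n mink_vec" where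
  "nor_part X p v = v - tan_part X p v"

text \<open>Vector fields along M are maps on the parameter domain. Ambient (flat) derivative D_v Y at X p
  for v tangent at X p.\<close>

definition amb_deriv :: "(real \<times> real \<Rightarrow> 'n::finite mink_vec) \<Rightarrow> real \<times> real \<Rightarrow> 'n mink_vec
     \<Rightarrow> (real \<times> real \<Rightarrow> 'n mink_vec) \<Rightarrow> 'n mink_vec" where
  "amb_deriv X p v Y = frechet_derivative Y (at p) (inv_into UNIV (dX X p) v)"

text \<open>Levi-Civita connection of M (Gauss formula: tangential part of the flat derivative) and
  second fundamental form (normal part).\<close>

definition cov :: "(real \<times> real \<Rightarrow> 'n::finite mink_vec) \<Rightarrow> real \<times> real
     \<Rightarrow> (real \<times> real \<Rightarrow> 'n mink_vec) \<Rightarrow> (real \<times> real \<Rightarrow> 'n mink_vec) \<Rightarrow> 'n mink_vec" where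
  "cov X p V Y = tan_part X p (amb_deriv X p (V p) Y)"

definition sff :: "(real \<times> real \<Rightarrow> 'n::finite mink_vec) \<Rightarrow> real \<times> real
     \<Rightarrow> (real \<times> real \<Rightarrow> 'n mink_vec) \<Rightarrow> (real \<times> real \<Rightarrow> 'n mink_vec) \<Rightarrow> 'n mink_vec" where
  "sff X p V Y = nor_part X p (amb_deriv X p (V p) Y)"

definition lie_bracket :: "(real \<times> real \<Rightarrow> 'n::finite mink_vec) \<Rightarrow> real \<times> real
     \<Rightarrow> (real \<times> real \<Rightarrow> 'n mink_vec) \<Rightarrow> (real \<times> real \<Rightarrow> 'n mink_vec) \<Rightarrow> 'n mink_vec" where
  "lie_bracket X p V Y =
     (let v = (\<lambda>q. inv_into UNIV (dX X q) (V q)); y = (\<lambda>q. inv_into UNIV (dX X q) (Y q))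
      in dX X p (frechet_derivative y (at p) (v p) - frechet_derivative v (at p) (y p)))"

end

theory Submission
  imports Defs
begin

lemma mvt1:
  fixes f :: "real \<Rightarrow> real"
  assumes "a < b" "\<And>x. a \<le> x \<Longrightarrow> x \<le> b \<Longrightarrow> (f has_derivative (\<lambda>h. h * f' x)) (at x)"
  shows "\<exists>x\<in>{a<..<b}. f b - f a = (b - a) * f' x"
proof -
  have "\<exists>x\<in>{a<..<b}. f b - f a = (\<lambda>h. h * f' x) (b - a)"
    by (rule mvt_simple[OF assms(1)]) (auto intro: has_derivative_at_withinI assms(2))
  thus ?thesis by auto
qed

lemma comp_u:
  fixes g :: "real \<times> real \<Rightarrow> real"
  assumes "(g has_derivative (\<lambda>h. fst h * gu + snd h * gv)) (at (s, c))"
  shows "((\<lambda>s. g (s, c)) has_derivative (\<lambda>h. h * gu)) (at s)"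
proof -
  have "((\<lambda>s. (s, c)) has_derivative (\<lambda>h. (h, 0))) (at s)"
    by (auto intro!: derivative_eq_intros)
  from has_derivative_compose[OF this assms] show ?thesis by (simp add: mult.commute)
qed

lemma comp_v:
  fixes g :: "real \<times> real \<Rightarrow> real"
  assumes "(g has_derivative (\<lambda>h. fst h * gu + snd h * gv)) (at (c, s))"
  shows "((\<lambda>s. g (c, s)) has_derivative (\<lambda>h. h * gv)) (at s)"
proof -
  have "((\<lambda>s. (c, s)) has_derivative (\<lambda>h. (0, h))) (at s)"
    by (auto intro!: derivative_eq_intros)
  from has_derivative_compose[OF this assms] show ?thesis by (simp add: mult.commute)
qed

lemma rect_u:
  fixes g gu gv guu guv gvu gvv :: "real \<times> real \<Rightarrow> real"
  assumes t: "t > 0"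
    and R: "\<And>x y. x \<in> {a..a+t} \<Longrightarrow> y \<in> {b..b+t} \<Longrightarrow> (x, y) \<in> U"
    and dg: "\<forall>q\<in>U. (g has_derivative (\<lambda>h. fst h * gu q + snd h * gv q)) (at q)"
    and du: "\<forall>q\<in>U. (gu has_derivative (\<lambda>h. fst h * guu q + snd h * guv q)) (at q)"
  shows "\<exists>x y. x \<in> {a..a+t} \<and> y \<in> {b..b+t} \<and>
    g (a+t, b+t) - g (a+t, b) - g (a, b+t) + g (a, b) = t * t * guv (x, y)"
proof -
  have "\<exists>x\<in>{a<..<a+t}. (\<lambda>s. g (s, b+t) - g (s, b)) (a+t) - (\<lambda>s. g (s, b+t) - g (s, b)) a
      = (a + t - a) * (gu (x, b+t) - gu (x, b))"
  proof (rule mvt1)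
    fix x assume x: "a \<le> x" "x \<le> a + t"
    have 1: "((\<lambda>s. g (s, b+t)) has_derivative (\<lambda>h. h * gu (x, b+t))) (at x)"
      by (rule comp_u) (use dg R x t in auto)
    have 2: "((\<lambda>s. g (s, b)) has_derivative (\<lambda>h. h * gu (x, b))) (at x)"
      by (rule comp_u) (use dg R x t in auto)
    show "((\<lambda>s. g (s, b+t) - g (s, b)) has_derivative (\<lambda>h. h * (gu (x, b+t) - gu (x, b)))) (at x)"
      using has_derivative_diff[OF 1 2] by (simp add: algebra_simps)
  qed (use t in auto)
  then obtain x where x: "x \<in> {a<..<a+t}" and ex: "g (a+t, b+t) - g (a+t, b) - (g (a, b+t) - g (a, b))
      = t * (gu (x, b+t) - gu (x, b))" by auto
  have "\<exists>y\<in>{b<..<b+t}. gu (x, b+t) - gu (x, b) = (b + t - b) * guv (x, y)"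
  proof (rule mvt1)
    fix y assume y: "b \<le> y" "y \<le> b + t"
    show "((\<lambda>s. gu (x, s)) has_derivative (\<lambda>h. h * guv (x, y))) (at y)"
      by (rule comp_v) (use du R x y t in auto)
  qed (use t in auto)
  then obtain y where y: "y \<in> {b<..<b+t}" and ey: "gu (x, b+t) - gu (x, b) = t * guv (x, y)" by auto
  show ?thesis
    by (rule exI[of _ x], rule exI[of _ y]) (use x y ex ey in auto)
qed

lemma rect_v:
  fixes g gu gv guu guv gvu gvv :: "real \<times> real \<Rightarrow> real"
  assumes t: "t > 0"
    and R: "\<And>x y. x \<in> {a..a+t} \<Longrightarrow> y \<in> {b..b+t} \<Longrightarrow> (x, y) \<in> U"
    and dg: "\<forall>q\<in>U. (g has_derivative (\<lambda>h. fst h * gu q + snd h * gv q)) (at q)"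
    and dv: "\<forall>q\<in>U. (gv has_derivative (\<lambda>h. fst h * gvu q + snd h * gvv q)) (at q)"
  shows "\<exists>x y. x \<in> {a..a+t} \<and> y \<in> {b..b+t} \<and>
    g (a+t, b+t) - g (a+t, b) - g (a, b+t) + g (a, b) = t * t * gvu (x, y)"
proof -
  have "\<exists>y\<in>{b<..<b+t}. (\<lambda>s. g (a+t, s) - g (a, s)) (b+t) - (\<lambda>s. g (a+t, s) - g (a, s)) b
      = (b + t - b) * (gv (a+t, y) - gv (a, y))"
  proof (rule mvt1)
    fix y assume y: "b \<le> y" "y \<le> b + t"
    have 1: "((\<lambda>s. g (a+t, s)) has_derivative (\<lambda>h. h * gv (a+t, y))) (at y)"
      by (rule comp_v) (use dg R y t in auto)
    have 2: "((\<lambda>s. g (a, s)) has_derivative (\<lambda>h. h * gv (a, y))) (at y)"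
      by (rule comp_v) (use dg R y t in auto)
    show "((\<lambda>s. g (a+t, s) - g (a, s)) has_derivative (\<lambda>h. h * (gv (a+t, y) - gv (a, y)))) (at y)"
      using has_derivative_diff[OF 1 2] by (simp add: algebra_simps)
  qed (use t in auto)
  then obtain y where y: "y \<in> {b<..<b+t}" and ey: "g (a+t, b+t) - g (a, b+t) - (g (a+t, b) - g (a, b))
      = t * (gv (a+t, y) - gv (a, y))" by auto
  have "\<exists>x\<in>{a<..<a+t}. gv (a+t, y) - gv (a, y) = (a + t - a) * gvu (x, y)"
  proof (rule mvt1)
    fix x assume x: "a \<le> x" "x \<le> a + t"
    show "((\<lambda>s. gv (s, y)) has_derivative (\<lambda>h. h * gvu (x, y))) (at x)"
      by (rule comp_u) (use dv R x y t in auto)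
  qed (use t in auto)
  then obtain x where x: "x \<in> {a<..<a+t}" and ex: "gv (a+t, y) - gv (a, y) = t * gvu (x, y)" by auto
  show ?thesis
    by (rule exI[of _ x], rule exI[of _ y]) (use x y ex ey in \<open>auto simp: algebra_simps\<close>)
qed

lemma dist_rect:
  assumes "x \<in> {a..a+t}" "y \<in> {b..b+t}" "t > 0"
  shows "dist (x, y) (a, b) \<le> 2 * t"
proof -
  have "dist (x, y) (a, b) = sqrt ((dist x a)\<^sup>2 + (dist y b)\<^sup>2)"
    by (simp add: dist_prod_def)
  also have "\<dots> \<le> \<bar>dist x a\<bar> + \<bar>dist y b\<bar>" by (rule sqrt_sum_squares_le_sum_abs)
  also have "\<dots> \<le> 2 * t" using assms by (auto simp: dist_real_def)
  finally show ?thesis .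
qed

lemma schwarz:
  fixes g gu gv guu guv gvu gvv :: "real \<times> real \<Rightarrow> real"
  assumes U: "open U" and p: "p \<in> U"
    and dg: "\<forall>q\<in>U. (g has_derivative (\<lambda>h. fst h * gu q + snd h * gv q)) (at q)"
    and du: "\<forall>q\<in>U. (gu has_derivative (\<lambda>h. fst h * guu q + snd h * guv q)) (at q)"
    and dv: "\<forall>q\<in>U. (gv has_derivative (\<lambda>h. fst h * gvu q + snd h * gvv q)) (at q)"
    and c1: "continuous_on U guv" and c2: "continuous_on U gvu"
  shows "guv p = gvu p"
proof (rule ccontr)
  assume ne: "guv p \<noteq> gvu p"
  define d where "d = \<bar>guv p - gvu p\<bar> / 2"
  have d: "d > 0" using ne by (simp add: d_def)
  obtain r where r: "r > 0" "ball p r \<subseteq> U" using U p openE by blast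
  obtain e1 where e1: "e1 > 0" "\<forall>q\<in>U. dist q p < e1 \<longrightarrow> dist (guv q) (guv p) < d"
    using c1 p d unfolding continuous_on_iff by blast
  obtain e2 where e2: "e2 > 0" "\<forall>q\<in>U. dist q p < e2 \<longrightarrow> dist (gvu q) (gvu p) < d"
    using c2 p d unfolding continuous_on_iff by blast
  define t where "t = min r (min e1 e2) / 4"
  have t: "t > 0" using r e1 e2 by (simp add: t_def)
  obtain a b where ab: "p = (a, b)" by fastforce
  have close: "dist (x, y) p < min r (min e1 e2)" if "x \<in> {a..a+t}" "y \<in> {b..b+t}" for x y
    using dist_rect[OF that t] t unfolding ab t_def by linarith
  have R: "(x, y) \<in> U" if "x \<in> {a..a+t}" "y \<in> {b..b+t}" for x y
    using close[OF that] r by (auto simp: dist_commute)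
  obtain x1 y1 where 1: "x1 \<in> {a..a+t}" "y1 \<in> {b..b+t}"
    "g (a+t, b+t) - g (a+t, b) - g (a, b+t) + g (a, b) = t * t * guv (x1, y1)"
    using rect_u[OF t R dg du] by blast
  obtain x2 y2 where 2: "x2 \<in> {a..a+t}" "y2 \<in> {b..b+t}"
    "g (a+t, b+t) - g (a+t, b) - g (a, b+t) + g (a, b) = t * t * gvu (x2, y2)"
    using rect_v[OF t R dg dv] by blast
  have eq: "guv (x1, y1) = gvu (x2, y2)" using 1(3) 2(3) t by simp
  have "dist (guv (x1, y1)) (guv p) < d" using e1 close[OF 1(1,2)] R[OF 1(1,2)] by auto
  moreover have "dist (gvu (x2, y2)) (gvu p) < d" using e2 close[OF 2(1,2)] R[OF 2(1,2)] by auto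
  ultimately show False using eq unfolding d_def dist_real_def by (auto simp: abs_if split: if_split_asm)
qed

lemma mink_comm: "mink v w = mink w v"
  by (simp add: mink_def inner_commute)
lemma mink_add_left[simp]: "mink (u + v) w = mink u w + mink v w"
  by (simp add: mink_def inner_add_left algebra_simps)
lemma mink_add_right[simp]: "mink w (u + v) = mink w u + mink w v"
  by (simp add: mink_def inner_add_right algebra_simps)
lemma mink_diff_left[simp]: "mink (u - v) w = mink u w - mink v w"
  by (simp add: mink_def inner_diff_left algebra_simps)
lemma mink_diff_right[simp]: "mink w (u - v) = mink w u - mink w v"
  by (simp add: mink_def inner_diff_right algebra_simps)
lemma mink_minus_left[simp]: "mink (- u) w = - mink u w"
  by (simp add: mink_def)
lemma mink_minus_right[simp]: "mink w (- u) = - mink w u"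
  by (simp add: mink_def)
lemma mink_scaleR_left[simp]: "mink (r *\<^sub>R u) w = r * mink u w"
  by (simp add: mink_def algebra_simps)
lemma mink_scaleR_right[simp]: "mink w (r *\<^sub>R u) = r * mink w u"
  by (simp add: mink_def algebra_simps)
lemma mink_zero_left[simp]: "mink 0 w = 0"
  by (simp add: mink_def)
lemma mink_zero_right[simp]: "mink w 0 = 0"
  by (simp add: mink_def)

lemma bb_mink: "bounded_bilinear (mink :: 'n::finite mink_vec \<Rightarrow> _)"
proof
  show "\<exists>K. \<forall>a b :: 'n mink_vec. norm (mink a b) \<le> norm a * norm b * K"
  proof (intro exI allI)
    fix a b :: "'n mink_vec"
    obtain a1 a2 b1 b2 where ab: "a = (a1, a2)" "b = (b1, b2)" by fastforce
    have "norm (mink a b) \<le> \<bar>a1\<bar> * \<bar>b1\<bar> + \<bar>a2 \<bullet> b2\<bar>"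
      by (simp add: mink_def ab abs_mult[symmetric])
    also have "\<dots> \<le> norm a * norm b + norm a * norm b"
    proof (rule add_mono)
      show "\<bar>a1\<bar> * \<bar>b1\<bar> \<le> norm a * norm b"
        using norm_fst_le[of a1 a2] norm_fst_le[of b1 b2] ab
        by (simp add: mult_mono)
      have "\<bar>a2 \<bullet> b2\<bar> \<le> norm a2 * norm b2" by (rule Cauchy_Schwarz_ineq2)
      also have "\<dots> \<le> norm a * norm b"
        using norm_snd_le[of a2 a1] norm_snd_le[of b2 b1] ab
        by (simp add: mult_mono)
      finally show "\<bar>a2 \<bullet> b2\<bar> \<le> norm a * norm b" .
    qed
    finally show "norm (mink a b) \<le> norm a * norm b * 2" by simp
  qed
qed simp_all

lemma has_derivative_mink[derivative_intros]:
  fixes f g :: "'a::real_normed_vector \<Rightarrow> 'n::finite mink_vec"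
  shows "(f has_derivative f') (at x within s) \<Longrightarrow> (g has_derivative g') (at x within s) \<Longrightarrow>
    ((\<lambda>x. mink (f x) (g x)) has_derivative (\<lambda>h. mink (f x) (g' h) + mink (f' h) (g x))) (at x within s)"
  by (rule bounded_bilinear.FDERIV[OF bb_mink])

lemma differentiable_mink[derivative_intros]:
  fixes f g :: "'a::real_normed_vector \<Rightarrow> 'n::finite mink_vec"
  shows "f differentiable (at x within s) \<Longrightarrow> g differentiable (at x within s) \<Longrightarrow>
    (\<lambda>x. mink (f x) (g x)) differentiable (at x within s)"
  unfolding differentiable_def by (blast intro: has_derivative_mink)

definition gram :: "'n::finite mink_vec \<Rightarrow> 'n mink_vec \<Rightarrow> real" where
  "gram e f = mink e e * mink f f - (mink e f)\<^sup>2"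

definition cf :: "'n::finite mink_vec \<Rightarrow> 'n mink_vec \<Rightarrow> 'n mink_vec \<Rightarrow> real \<times> real" where
  "cf e f v = ((mink f f * mink v e - mink e f * mink v f) / gram e f,
               (mink e e * mink v f - mink e f * mink v e) / gram e f)"

definition lin :: "'n::finite mink_vec \<Rightarrow> 'n mink_vec \<Rightarrow> real \<times> real \<Rightarrow> 'n mink_vec" where
  "lin e f h = fst h *\<^sub>R e + snd h *\<^sub>R f"

lemma gram_lin:
  "gram (lin e f a) (lin e f b) = (fst a * snd b - snd a * fst b)\<^sup>2 * gram e f"
  unfolding gram_def lin_def
  by (simp add: mink_comm[of f e] power2_eq_square algebra_simps)

lemma cf_lin: "gram e f \<noteq> 0 \<Longrightarrow> cf e f (lin e f k) = k"
  unfolding cf_def lin_def prod_eq_iff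
  by (simp add: mink_comm[of f e] field_simps gram_def power2_eq_square)

lemma real_cramer1:
  fixes A B C P Q :: real
  assumes "A * C - B\<^sup>2 \<noteq> 0"
  shows "P - ((C * P - B * Q) / (A * C - B\<^sup>2) * A + (A * Q - B * P) / (A * C - B\<^sup>2) * B) = 0"
proof -
  have "(C * P - B * Q) / (A * C - B\<^sup>2) * A + (A * Q - B * P) / (A * C - B\<^sup>2) * B
     = ((C * P - B * Q) * A + (A * Q - B * P) * B) / (A * C - B\<^sup>2)" by (simp add: add_divide_distrib)
  also have "\<dots> = P" using assms by (simp add: field_simps power2_eq_square)
  finally show ?thesis by simp
qed
lemma real_cramer2:
  fixes A B C P Q :: real
  assumes "A * C - B\<^sup>2 \<noteq> 0"
  shows "Q - ((C * P - B * Q) / (A * C - B\<^sup>2) * B + (A * Q - B * P) / (A * C - B\<^sup>2) * C) = 0"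
proof -
  have "(C * P - B * Q) / (A * C - B\<^sup>2) * B + (A * Q - B * P) / (A * C - B\<^sup>2) * C
     = ((C * P - B * Q) * B + (A * Q - B * P) * C) / (A * C - B\<^sup>2)" by (simp add: add_divide_distrib)
  also have "\<dots> = Q" using assms by (simp add: field_simps power2_eq_square)
  finally show ?thesis by simp
qed

lemma lin_cf_orth:
  assumes g: "gram e f \<noteq> 0"
  shows "mink (v - lin e f (cf e f v)) (lin e f k) = 0"
proof -
  have 1: "mink (v - lin e f (cf e f v)) e = 0"
    using real_cramer1[where A="mink e e" and B="mink e f" and C="mink f f" and P="mink v e" and Q="mink v f"] g
    unfolding cf_def lin_def gram_def by (simp add: mink_comm[of f e] mult.commute)
  have 2: "mink (v - lin e f (cf e f v)) f = 0"
    using real_cramer2[where A="mink e e" and B="mink e f" and C="mink f f" and P="mink v e" and Q="mink v f"] g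
    unfolding cf_def lin_def gram_def by (simp add: mink_comm[of f e] mult.commute)
  show ?thesis unfolding lin_def[of e f k] using 1 2 by simp
qed

lemma proj_char:
  assumes g: "gram e f \<noteq> 0"
  shows "(u \<in> range (lin e f) \<and> (\<forall>w\<in>range (lin e f). mink (v - u) w = 0)) \<longleftrightarrow> u = lin e f (cf e f v)"
proof
  assume "u = lin e f (cf e f v)"
  thus "u \<in> range (lin e f) \<and> (\<forall>w\<in>range (lin e f). mink (v - u) w = 0)"
    using lin_cf_orth[OF g] by auto
next
  assume A: "u \<in> range (lin e f) \<and> (\<forall>w\<in>range (lin e f). mink (v - u) w = 0)"
  then obtain k where k: "u = lin e f k" by auto
  have o1: "mink (v - lin e f k) e = 0" using A k by (metis rangeI lin_def fst_conv snd_conv scale_one scale_zero_left add_0_right)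
  have o2: "mink (v - lin e f k) f = 0" using A k by (metis rangeI lin_def fst_conv snd_conv scale_one scale_zero_left add_0_left)
  have "cf e f v = cf e f (lin e f k)"
    using o1 o2 unfolding cf_def by (simp add: mink_comm)
  thus "u = lin e f (cf e f v)" using cf_lin[OF g] k by simp
qed


lemma schwarz_vec:
  fixes X f1 f2 f11 f12 f21 f22 :: "real \<times> real \<Rightarrow> 'a::real_inner"
  assumes U: "open U" and p: "p \<in> U"
    and dX: "\<forall>q\<in>U. (X has_derivative (\<lambda>h. fst h *\<^sub>R f1 q + snd h *\<^sub>R f2 q)) (at q)"
    and d1: "\<forall>q\<in>U. (f1 has_derivative (\<lambda>h. fst h *\<^sub>R f11 q + snd h *\<^sub>R f12 q)) (at q)"
    and d2: "\<forall>q\<in>U. (f2 has_derivative (\<lambda>h. fst h *\<^sub>R f21 q + snd h *\<^sub>R f22 q)) (at q)"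
    and c12: "continuous_on U f12" and c21: "continuous_on U f21"
  shows "f12 p = f21 p"
proof -
  have I: "inner (f12 p) c = inner (f21 p) c" for c
  proof (rule schwarz[OF U p, where g="\<lambda>q. inner (X q) c" and gu="\<lambda>q. inner (f1 q) c"
        and gv="\<lambda>q. inner (f2 q) c" and guu="\<lambda>q. inner (f11 q) c" and gvv="\<lambda>q. inner (f22 q) c"])
    show "\<forall>q\<in>U. ((\<lambda>q. inner (X q) c) has_derivative (\<lambda>h. fst h * inner (f1 q) c + snd h * inner (f2 q) c)) (at q)"
      using dX by (auto intro!: has_derivative_eq_rhs[OF has_derivative_inner_left] simp: inner_add_left)
    show "\<forall>q\<in>U. ((\<lambda>q. inner (f1 q) c) has_derivative (\<lambda>h. fst h * inner (f11 q) c + snd h * inner (f12 q) c)) (at q)"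
      using d1 by (auto intro!: has_derivative_eq_rhs[OF has_derivative_inner_left] simp: inner_add_left)
    show "\<forall>q\<in>U. ((\<lambda>q. inner (f2 q) c) has_derivative (\<lambda>h. fst h * inner (f21 q) c + snd h * inner (f22 q) c)) (at q)"
      using d2 by (auto intro!: has_derivative_eq_rhs[OF has_derivative_inner_left] simp: inner_add_left)
    show "continuous_on U (\<lambda>q. inner (f12 q) c)" by (intro continuous_intros c12)
    show "continuous_on U (\<lambda>q. inner (f21 q) c)" by (intro continuous_intros c21)
  qed
  have "inner (f12 p - f21 p) (f12 p - f21 p) = 0"
    using I[of "f12 p - f21 p"] by (simp add: inner_diff_left)
  thus ?thesis by simp
qed

lemma deriv_eq_on:
  assumes "open U" "p \<in> U" "\<forall>q\<in>U. \<phi> q = \<psi> q"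
    "(\<phi> has_derivative \<phi>') (at p)" "(\<psi> has_derivative \<psi>') (at p)"
  shows "\<phi>' h = \<psi>' h"
proof -
  have "(\<psi> has_derivative \<phi>') (at p)"
    using has_derivative_transform_within_open[OF assms(4,1,2)] assms(3) by auto
  thus ?thesis using has_derivative_unique assms(5) by metis
qed

lemma deriv_const_on:
  assumes "open U" "p \<in> U" "\<forall>q\<in>U. \<phi> q = c" "(\<phi> has_derivative \<phi>') (at p)"
  shows "\<phi>' h = 0"
  using deriv_eq_on[OF assms(1,2), of \<phi> "\<lambda>_. c", OF assms(3,4) has_derivative_const] by simp

lemma lin_span:
  assumes d: "fst a * snd b - snd a * fst b \<noteq> 0"
  shows "lin e f k = ((fst k * snd b - snd k * fst b) / (fst a * snd b - snd a * fst b)) *\<^sub>R lin e f a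
     + ((fst a * snd k - snd a * fst k) / (fst a * snd b - snd a * fst b)) *\<^sub>R lin e f b"
proof -
  define d where "d = fst a * snd b - snd a * fst b"
  have dn: "d \<noteq> 0" using d by (simp add: d_def)
  have c1: "(fst k * snd b - snd k * fst b) / d * fst a + (fst a * snd k - snd a * fst k) / d * fst b = fst k"
  proof -
    have "(fst k * snd b - snd k * fst b) / d * fst a + (fst a * snd k - snd a * fst k) / d * fst b
        = ((fst k * snd b - snd k * fst b) * fst a + (fst a * snd k - snd a * fst k) * fst b) / d"
      by (simp add: add_divide_distrib)
    also have "\<dots> = (fst k * d) / d" by (simp add: d_def algebra_simps)
    finally show ?thesis using dn by simp
  qed
  have c2: "(fst k * snd b - snd k * fst b) / d * snd a + (fst a * snd k - snd a * fst k) / d * snd b = snd k"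
  proof -
    have "(fst k * snd b - snd k * fst b) / d * snd a + (fst a * snd k - snd a * fst k) / d * snd b
        = ((fst k * snd b - snd k * fst b) * snd a + (fst a * snd k - snd a * fst k) * snd b) / d"
      by (simp add: add_divide_distrib)
    also have "\<dots> = (snd k * d) / d" by (simp add: d_def algebra_simps)
    finally show ?thesis using dn by simp
  qed
  have "((fst k * snd b - snd k * fst b) / d) *\<^sub>R lin e f a + ((fst a * snd k - snd a * fst k) / d) *\<^sub>R lin e f b
     = ((fst k * snd b - snd k * fst b) / d * fst a + (fst a * snd k - snd a * fst k) / d * fst b) *\<^sub>R e
     + ((fst k * snd b - snd k * fst b) / d * snd a + (fst a * snd k - snd a * fst k) / d * snd b) *\<^sub>R f"
    unfolding lin_def by (simp add: algebra_simps)
  also have "\<dots> = lin e f k" by (simp only: c1 c2 lin_def)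
  finally have *: "((fst k * snd b - snd k * fst b) / d) *\<^sub>R lin e f a + ((fst a * snd k - snd a * fst k) / d) *\<^sub>R lin e f b = lin e f k" .
  show ?thesis unfolding d_def[symmetric] using *[symmetric] .
qed

lemma lin_scale: "lin e f (c *\<^sub>R k) = c *\<^sub>R lin e f k"
  by (simp add: lin_def algebra_simps)
lemma lin_diff: "lin e f (k - l) = lin e f k - lin e f l"
  by (simp add: lin_def algebra_simps)
lemma lin_zero: "lin e f 0 = 0"
  by (simp add: lin_def)


theorem mainTheorem3:
  fixes U :: "(real \<times> real) set"
    and X :: "real \<times> real \<Rightarrow> 'n::finite mink_vec"
    and Z :: "'n mink_vec"
    and W :: "real \<times> real \<Rightarrow> 'n mink_vec"
  assumes surf: "timelike_surface U X"
    and Z_unit: "mink Z Z = 1"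
    and null_dir: "\<forall>q\<in>U. lightlike (tan_part X q Z)"
    and W_smooth: "smooth_on U W"
    and W_props: "\<forall>q\<in>U. W q \<in> tangent_space X q \<and> lightlike (W q) \<and> mink (tan_part X q Z) (W q) = -1"
    and p: "p \<in> U"
  defines "ZT \<equiv> (\<lambda>q. tan_part X q Z)"
    and "a \<equiv> (\<lambda>q. mink (sff X q W W) (nor_part X q Z))"
  shows "cov X p ZT ZT = 0 \<and> cov X p ZT W = 0 \<and> cov X p W ZT = - a p *\<^sub>R ZT p
         \<and> cov X p W W = a p *\<^sub>R W p \<and> lie_bracket X p ZT W = a p *\<^sub>R ZT p"
proof -
  have U: "open U" using surf unfolding timelike_surface_def by blast
  have "Ck_on (Suc (Suc 0)) U X" using surf unfolding timelike_surface_def smooth_on_def by blast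
  then obtain f1 f2 f11 f12 f21 f22 where
    dXq: "\<forall>q\<in>U. (X has_derivative (\<lambda>h. fst h *\<^sub>R f1 q + snd h *\<^sub>R f2 q)) (at q)"
    and d1: "\<forall>q\<in>U. (f1 has_derivative (\<lambda>h. fst h *\<^sub>R f11 q + snd h *\<^sub>R f12 q)) (at q)"
    and d2: "\<forall>q\<in>U. (f2 has_derivative (\<lambda>h. fst h *\<^sub>R f21 q + snd h *\<^sub>R f22 q)) (at q)"
    and c12: "continuous_on U f12" and c21: "continuous_on U f21"
    by auto
  have "Ck_on (Suc 0) U W" using W_smooth unfolding smooth_on_def by blast
  then obtain w1 w2 where
    dWq: "\<forall>q\<in>U. (W has_derivative (\<lambda>h. fst h *\<^sub>R w1 q + snd h *\<^sub>R w2 q)) (at q)"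
    by auto
  have sym: "f12 p = f21 p" by (rule schwarz_vec[OF U p dXq d1 d2 c12 c21])
  define L where "L = (\<lambda>q. lin (f1 q) (f2 q))"
  define C where "C = (\<lambda>q. cf (f1 q) (f2 q))"
  have dXL: "dX X q = L q" if "q \<in> U" for q
    using frechet_derivative_at[OF dXq[rule_format, OF that]] unfolding dX_def L_def lin_def by simp
  have TL: "tangent_space X q = range (L q)" if "q \<in> U" for q
    using dXL[OF that] unfolding tangent_space_def by simp
  have G: "gram (f1 q) (f2 q) \<noteq> 0" if q: "q \<in> U" for q
  proof -
    obtain e1 e2 where e: "e1 \<in> range (L q)" "e2 \<in> range (L q)" "mink e1 e1 = -1" "mink e2 e2 = 1" "mink e1 e2 = 0"
      using surf q TL[OF q] unfolding timelike_surface_def by metis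
    then obtain k1 k2 where k: "e1 = L q k1" "e2 = L q k2" by auto
    have "gram e1 e2 = -1" using e unfolding gram_def by simp
    thus ?thesis using gram_lin[of "f1 q" "f2 q" k1 k2] k unfolding L_def by auto
  qed
  have charU: "(u \<in> range (L q) \<and> (\<forall>w\<in>range (L q). mink (v - u) w = 0)) \<longleftrightarrow> u = tan_part X q v"
    if q: "q \<in> U" for q u v
  proof -
    have "tan_part X q v = L q (C q v)"
      unfolding tan_part_def TL[OF q] L_def C_def proj_char[OF G[OF q]] by simp
    thus ?thesis unfolding L_def C_def using proj_char[OF G[OF q]] by simp
  qed
  have tanU: "tan_part X q v = L q (C q v)" if q: "q \<in> U" for q v
    unfolding tan_part_def TL[OF q] L_def C_def proj_char[OF G[OF q]] by simp
  have d1p: "(f1 has_derivative (\<lambda>h. fst h *\<^sub>R f11 p + snd h *\<^sub>R f12 p)) (at p)" using d1 p by blast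
  have d2p: "(f2 has_derivative (\<lambda>h. fst h *\<^sub>R f21 p + snd h *\<^sub>R f22 p)) (at p)" using d2 p by blast
  define dW where "dW = (\<lambda>h. fst h *\<^sub>R w1 p + snd h *\<^sub>R w2 p)"
  have hW: "(W has_derivative dW) (at p)" using dWq p unfolding dW_def by blast
  have f1d: "f1 differentiable (at p)" using d1p by (rule differentiableI)
  have f2d: "f2 differentiable (at p)" using d2p by (rule differentiableI)
  have ZTU: "ZT q = L q (C q Z)" if "q \<in> U" for q unfolding ZT_def using tanU[OF that] .
  have Gp: "gram (f1 p) (f2 p) \<noteq> 0" using G p by blast
  have "(\<lambda>q. L q (C q Z)) differentiable (at p)"
    unfolding L_def C_def lin_def cf_def
    using Gp f1d f2d unfolding gram_def
    by (auto intro!: derivative_intros)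
  then obtain dZ0 where "((\<lambda>q. L q (C q Z)) has_derivative dZ0) (at p)" unfolding differentiable_def by blast
  hence "(ZT has_derivative dZ0) (at p)"
    by (rule has_derivative_transform_within_open[OF _ U p]) (use ZTU in auto)
  hence ZTd: "ZT differentiable (at p)" by (rule differentiableI)
  define dZ where "dZ = frechet_derivative ZT (at p)"
  have hZ: "(ZT has_derivative dZ) (at p)" using ZTd unfolding dZ_def frechet_derivative_works .
  have Wd: "W differentiable (at p)" using hW by (rule differentiableI)
  define vco where "vco = (\<lambda>q. inv_into UNIV (dX X q) (ZT q))"
  define yco where "yco = (\<lambda>q. inv_into UNIV (dX X q) (W q))"
  have ZTT: "ZT q \<in> range (L q)" if "q \<in> U" for q using ZTU[OF that] by auto
  have WT: "W q \<in> range (L q)" if "q \<in> U" for q using W_props TL that by blast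
  have vL: "L q (vco q) = ZT q" if "q \<in> U" for q
    unfolding vco_def dXL[OF that] using ZTT[OF that] by (rule f_inv_into_f)
  have yL: "L q (yco q) = W q" if "q \<in> U" for q
    unfolding yco_def dXL[OF that] using WT[OF that] by (rule f_inv_into_f)
  have vC: "vco q = C q (ZT q)" if "q \<in> U" for q
    using cf_lin[OF G[OF that], of "vco q"] vL[OF that] unfolding L_def C_def by simp
  have yC: "yco q = C q (W q)" if "q \<in> U" for q
    using cf_lin[OF G[OF that], of "yco q"] yL[OF that] unfolding L_def C_def by simp
  have "(\<lambda>q. C q (ZT q)) differentiable (at p)"
    unfolding C_def cf_def
    using Gp f1d f2d ZTd unfolding gram_def
    by (auto intro!: derivative_intros)
  then obtain dv0 where "((\<lambda>q. C q (ZT q)) has_derivative dv0) (at p)" unfolding differentiable_def by blast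
  hence "(vco has_derivative dv0) (at p)"
    by (rule has_derivative_transform_within_open[OF _ U p]) (use vC in auto)
  hence vd: "vco differentiable (at p)" by (rule differentiableI)
  have "(\<lambda>q. C q (W q)) differentiable (at p)"
    unfolding C_def cf_def
    using Gp f1d f2d Wd unfolding gram_def
    by (auto intro!: derivative_intros)
  then obtain dy0 where "((\<lambda>q. C q (W q)) has_derivative dy0) (at p)" unfolding differentiable_def by blast
  hence "(yco has_derivative dy0) (at p)"
    by (rule has_derivative_transform_within_open[OF _ U p]) (use yC in auto)
  hence yd: "yco differentiable (at p)" by (rule differentiableI)
  define dv where "dv = frechet_derivative vco (at p)"
  have hv: "(vco has_derivative dv) (at p)" using vd unfolding dv_def frechet_derivative_works .
  define dy where "dy = frechet_derivative yco (at p)"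
  have hy: "(yco has_derivative dy) (at p)" using yd unfolding dy_def frechet_derivative_works .
  define kz where "kz = vco p"
  define kw where "kw = yco p"
  have ZTp: "ZT p = L p kz" using vL[OF p] unfolding kz_def by simp
  have Wp: "W p = L p kw" using yL[OF p] unfolding kw_def by simp
  define N where "N = Z - ZT p"
  have orthU: "mink (Z - ZT q) w = 0" if "q \<in> U" "w \<in> range (L q)" for q w
    using charU[OF that(1), of "ZT q" Z] that unfolding ZT_def by auto
  have ZZ: "mink (ZT q) (ZT q) = 0" if "q \<in> U" for q
    using null_dir that unfolding ZT_def lightlike_def by auto
  have WW: "mink (W q) (W q) = 0" if "q \<in> U" for q
    using W_props that unfolding lightlike_def by auto
  have ZW: "mink (ZT q) (W q) = -1" if "q \<in> U" for q
    using W_props that unfolding ZT_def by auto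
  have i: "mink (dZ h) (ZT p) = 0" for h
    using deriv_const_on[OF U p _ has_derivative_mink[OF hZ hZ], of 0 h] ZZ
    by (simp add: mink_comm[of "ZT p"])
  have ii: "mink (ZT p) (dW h) + mink (dZ h) (W p) = 0" for h
    using deriv_const_on[OF U p _ has_derivative_mink[OF hZ hW], of "-1" h] ZW by simp
  have iii: "mink (dW h) (W p) = 0" for h
    using deriv_const_on[OF U p _ has_derivative_mink[OF hW hW], of 0 h] WW
    by (simp add: mink_comm[of "W p"])
  have iv: "mink N (fst h *\<^sub>R f11 p + snd h *\<^sub>R f12 p) + mink (0 - dZ h) (f1 p) = 0" for h
  proof -
    have "\<forall>q\<in>U. mink (Z - ZT q) (f1 q) = 0"
    proof
      fix q assume q: "q \<in> U"
      have "f1 q = L q (1, 0)" by (simp add: L_def lin_def)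
      thus "mink (Z - ZT q) (f1 q) = 0" using orthU[OF q] by auto
    qed
    from deriv_const_on[OF U p this has_derivative_mink[OF has_derivative_diff[OF has_derivative_const hZ] d1p], of h]
    show ?thesis unfolding N_def by simp
  qed
  have v: "mink N (fst h *\<^sub>R f21 p + snd h *\<^sub>R f22 p) + mink (0 - dZ h) (f2 p) = 0" for h
  proof -
    have "\<forall>q\<in>U. mink (Z - ZT q) (f2 q) = 0"
    proof
      fix q assume q: "q \<in> U"
      have "f2 q = L q (0, 1)" by (simp add: L_def lin_def)
      thus "mink (Z - ZT q) (f2 q) = 0" using orthU[OF q] by auto
    qed
    from deriv_const_on[OF U p this has_derivative_mink[OF has_derivative_diff[OF has_derivative_const hZ] d2p], of h]
    show ?thesis unfolding N_def by simp
  qed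
  have vi: "mink (W p) (0 - dZ h) + mink (dW h) N = 0" for h
  proof -
    have "\<forall>q\<in>U. mink (W q) (Z - ZT q) = 0"
      using orthU WT by (auto simp: mink_comm[of "W _"])
    from deriv_const_on[OF U p this has_derivative_mink[OF hW has_derivative_diff[OF has_derivative_const hZ]], of h]
    show ?thesis unfolding N_def by simp
  qed
  define E' where "E' = (\<lambda>h. fst h *\<^sub>R f11 p + snd h *\<^sub>R f12 p)"
  define F' where "F' = (\<lambda>h. fst h *\<^sub>R f21 p + snd h *\<^sub>R f22 p)"
  define Bm where "Bm = (\<lambda>h k. fst k *\<^sub>R E' h + snd k *\<^sub>R F' h)"
  have Bsym: "Bm h k = Bm k h" for h k
    unfolding Bm_def E'_def F'_def sym by (simp add: algebra_simps)
  have key: "mink (dZ h) (L p k) = mink N (Bm h k)" for h k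
    using iv[of h] v[of h] unfolding Bm_def E'_def F'_def L_def lin_def
    by (simp add: mink_comm[of N] mink_comm[of "dZ h"])
  have vii: "dZ h = L p (dv h) + Bm h kz" for h
  proof -
    have D: "((\<lambda>q. fst (vco q) *\<^sub>R f1 q + snd (vco q) *\<^sub>R f2 q) has_derivative
      (\<lambda>h. (fst (vco p) *\<^sub>R (fst h *\<^sub>R f11 p + snd h *\<^sub>R f12 p) + fst (dv h) *\<^sub>R f1 p) +
           (snd (vco p) *\<^sub>R (fst h *\<^sub>R f21 p + snd h *\<^sub>R f22 p) + snd (dv h) *\<^sub>R f2 p))) (at p)"
      by (intro has_derivative_add has_derivative_scaleR has_derivative_fst has_derivative_snd hv d1p d2p)
    have "\<forall>q\<in>U. fst (vco q) *\<^sub>R f1 q + snd (vco q) *\<^sub>R f2 q = ZT q"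
      using vL unfolding L_def lin_def by auto
    from deriv_eq_on[OF U p this D hZ, of h]
    show ?thesis unfolding Bm_def E'_def F'_def L_def lin_def kz_def by (simp add: algebra_simps)
  qed
  have viii: "dW h = L p (dy h) + Bm h kw" for h
  proof -
    have D: "((\<lambda>q. fst (yco q) *\<^sub>R f1 q + snd (yco q) *\<^sub>R f2 q) has_derivative
      (\<lambda>h. (fst (yco p) *\<^sub>R (fst h *\<^sub>R f11 p + snd h *\<^sub>R f12 p) + fst (dy h) *\<^sub>R f1 p) +
           (snd (yco p) *\<^sub>R (fst h *\<^sub>R f21 p + snd h *\<^sub>R f22 p) + snd (dy h) *\<^sub>R f2 p))) (at p)"
      by (intro has_derivative_add has_derivative_scaleR has_derivative_fst has_derivative_snd hy d1p d2p)
    have "\<forall>q\<in>U. fst (yco q) *\<^sub>R f1 q + snd (yco q) *\<^sub>R f2 q = W q"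
      using yL unfolding L_def lin_def by auto
    from deriv_eq_on[OF U p this D hW, of h]
    show ?thesis unfolding Bm_def E'_def F'_def L_def lin_def kw_def by (simp add: algebra_simps)
  qed
  have det: "fst kz * snd kw - snd kz * fst kw \<noteq> 0"
  proof
    assume d0: "fst kz * snd kw - snd kz * fst kw = 0"
    have "gram (L p kz) (L p kw) = (fst kz * snd kw - snd kz * fst kw)\<^sup>2 * gram (f1 p) (f2 p)"
      unfolding L_def by (rule gram_lin)
    moreover have "gram (L p kz) (L p kw) = -1"
      unfolding ZTp[symmetric] Wp[symmetric] gram_def using ZZ[OF p] WW[OF p] ZW[OF p] by simp
    ultimately show False using d0 by simp
  qed
  have tanP: "tan_part X p x = u"
    if u: "u \<in> range (L p)" and o1: "mink (x - u) (ZT p) = 0" and o2: "mink (x - u) (W p) = 0" for x u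
  proof -
    have "\<forall>w\<in>range (L p). mink (x - u) w = 0"
    proof
      fix w assume "w \<in> range (L p)"
      then obtain k where k: "w = L p k" by auto
      have "w = ((fst k * snd kw - snd k * fst kw) / (fst kz * snd kw - snd kz * fst kw)) *\<^sub>R ZT p
        + ((fst kz * snd k - snd kz * fst k) / (fst kz * snd kw - snd kz * fst kw)) *\<^sub>R W p"
        unfolding k ZTp Wp L_def by (rule lin_span[OF det])
      thus "mink (x - u) w = 0" using o1 o2 by simp
    qed
    thus ?thesis using charU[OF p, of u x] u by simp
  qed
  have amb: "amb_deriv X p (ZT p) Y = frechet_derivative Y (at p) kz"
    "amb_deriv X p (W p) Y = frechet_derivative Y (at p) kw" for Y
    unfolding amb_deriv_def kz_def kw_def vco_def yco_def by simp_all
  have fZ: "frechet_derivative ZT (at p) = dZ" unfolding dZ_def ..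
  have fW: "frechet_derivative W (at p) = dW" using frechet_derivative_at[OF hW] by simp
  have Lsc: "c *\<^sub>R L p k \<in> range (L p)" for c k
    using lin_scale[of "f1 p" "f2 p" c k] unfolding L_def by (metis rangeI)
  have L0: "0 \<in> range (L p)" using Lsc[of 0] by simp
  have ap: "a p = mink (dW kw) N"
  proof -
    have T1: "tan_part X p (dW kw) \<in> range (L p)" using charU[OF p] by blast
    have "mink (Z - ZT p) (tan_part X p (dW kw)) = 0" using orthU[OF p T1] .
    hence o: "mink (tan_part X p (dW kw)) N = 0" unfolding N_def by (simp add: mink_comm[of "Z" "tan_part X p (dW kw)"] mink_comm[of "ZT p" "tan_part X p (dW kw)"])
    have tz: "nor_part X p Z = N" by (simp add: nor_part_def N_def ZT_def)
    have "a p = mink (dW kw - tan_part X p (dW kw)) N"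
      unfolding a_def tz unfolding sff_def nor_part_def amb fW by simp
    thus ?thesis using o by simp
  qed
  have key2: "mink (dZ kz) (W p) = 0"
    using key[of kz kw] key[of kw kz] i[of kw] unfolding Wp ZTp Bsym[of kz kw] by simp
  have G1: "cov X p ZT ZT = 0"
    unfolding cov_def amb fZ by (rule tanP) (use L0 i key2 in auto)
  have G2: "cov X p ZT W = 0"
    unfolding cov_def amb fW by (rule tanP) (use L0 iii ii[of kz] key2 in \<open>auto simp: mink_comm[of "ZT p" "dW kz"]\<close>)
  have G3: "cov X p W ZT = - a p *\<^sub>R ZT p"
    unfolding cov_def amb fZ
  proof (rule tanP)
    show "- a p *\<^sub>R ZT p \<in> range (L p)" unfolding ZTp by (rule Lsc)
    show "mink (dZ kw - - a p *\<^sub>R ZT p) (ZT p) = 0" using i ZZ[OF p] by simp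
    show "mink (dZ kw - - a p *\<^sub>R ZT p) (W p) = 0" using vi[of kw] ZW[OF p] ap
      by (simp add: mink_comm[of "W p" "dZ kw"])
  qed
  have G4: "cov X p W W = a p *\<^sub>R W p"
    unfolding cov_def amb fW
  proof (rule tanP)
    show "a p *\<^sub>R W p \<in> range (L p)" unfolding Wp by (rule Lsc)
    show "mink (dW kw - a p *\<^sub>R W p) (ZT p) = 0" using ii[of kw] vi[of kw] ZW[OF p] ap
      by (simp add: mink_comm[of "dW kw" "ZT p"] mink_comm[of "W p" "ZT p"] mink_comm[of "W p" "dZ kw"])
    show "mink (dW kw - a p *\<^sub>R W p) (W p) = 0" using iii WW[OF p] by simp
  qed
  have lie: "lie_bracket X p ZT W = dW kz - dZ kw"
  proof -
    have "lie_bracket X p ZT W = L p (dy kz - dv kw)"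
      unfolding lie_bracket_def Let_def dXL[OF p] dy_def dv_def kz_def kw_def vco_def yco_def by simp
    also have "\<dots> = L p (dy kz) - L p (dv kw)" unfolding L_def by (rule lin_diff)
    also have "\<dots> = dW kz - dZ kw" using vii[of kw] viii[of kz] Bsym[of kz kw] by simp
    finally show ?thesis .
  qed
  have lieT: "lie_bracket X p ZT W \<in> range (L p)"
    unfolding lie_bracket_def Let_def dXL[OF p] by simp
  have G5: "lie_bracket X p ZT W = a p *\<^sub>R ZT p"
  proof -
    have 1: "tan_part X p (lie_bracket X p ZT W) = lie_bracket X p ZT W"
      by (rule tanP[OF lieT]) simp_all
    have 2: "tan_part X p (lie_bracket X p ZT W) = a p *\<^sub>R ZT p"
    proof (rule tanP)
      show "a p *\<^sub>R ZT p \<in> range (L p)" unfolding ZTp by (rule Lsc)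
      show "mink (lie_bracket X p ZT W - a p *\<^sub>R ZT p) (ZT p) = 0"
        unfolding lie using ii[of kz] key2 i ZZ[OF p] by (simp add: mink_comm[of "ZT p" "dW kz"])
      show "mink (lie_bracket X p ZT W - a p *\<^sub>R ZT p) (W p) = 0"
        unfolding lie using iii vi[of kw] ZW[OF p] ap by (simp add: mink_comm[of "W p" "dZ kw"])
    qed
    show ?thesis using 1 2 by simp
  qed
  show ?thesis using G1 G2 G3 G4 G5 by blast
qed

end
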